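(* Let $p$ be an odd prime and $m\in\mathbb Z_p$ with $m\not\equiv0\pmod p$. Then $$\sum_{k=0}^{p-1}\frac{\binom{2k}k^3}{(16m)^k(2k-1)^2}\equiv\Big(4-\frac{16}m\Big)\sum_{k=0}^{(p-1)/2}\frac{k\binom{2k}k^3}{(16m)^k}+\Big(1+\frac4m\Big)\sum_{k=0}^{(p-1)/2}\frac{\binom{2k}k^3}{(16m)^k}-\frac6m\sum_{k=0}^{(p-1)/2}\frac{\binom{2k}k^3}{(16m)^k(k+1)}\pmod{p^3}.$$
   Context: $\mathbb Z_p$ denotes the set of rational numbers whose denominator is not divisible by $p$; for $u,v\in\mathbb Z_p$, $u\equiv v\pmod{p^r}$ means $(u-v)/p^r\in\mathbb Z_p$. *)

theory Defs
  imports Complex_Main "HOL-Computational_Algebra.Primes"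
begin

text \<open>The ring Z_p of rationals whose (reduced) denominator is not divisible by p.\<close>
definition in_Zp :: "nat \<Rightarrow> rat \<Rightarrow> bool" where
  "in_Zp p x \<longleftrightarrow> \<not> (int p dvd snd (quotient_of x))"

definition cong_Zp :: "rat \<Rightarrow> rat \<Rightarrow> nat \<Rightarrow> nat \<Rightarrow> bool" where
  "cong_Zp u v p r \<longleftrightarrow> in_Zp p ((u - v) / of_nat p ^ r)"

end

theory Submission
  imports Defs
begin


lemma in_Zp_iff:
  assumes p: "prime p"
  shows "in_Zp p x \<longleftrightarrow> (\<exists>a b. b \<noteq> 0 \<and> \<not> int p dvd b \<and> x = of_int a / of_int b)"
proof
  assume "in_Zp p x"
  obtain a b where q: "quotient_of x = (a, b)" by (cases "quotient_of x")
  have "b > 0" using quotient_of_denom_pos[OF q] .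
  moreover have "\<not> int p dvd b" using \<open>in_Zp p x\<close> q by (simp add: in_Zp_def)
  ultimately show "\<exists>a b. b \<noteq> 0 \<and> \<not> int p dvd b \<and> x = of_int a / of_int b"
    using quotient_of_div[OF q] by (intro exI[of _ a] exI[of _ b]) auto
next
  assume "\<exists>a b. b \<noteq> 0 \<and> \<not> int p dvd b \<and> x = of_int a / of_int b"
  then obtain a b where ab: "b \<noteq> 0" "\<not> int p dvd b" "x = of_int a / of_int b" by blast
  obtain a' b' where q: "quotient_of x = (a', b')" by (cases "quotient_of x")
  have b'0: "b' > 0" using quotient_of_denom_pos[OF q] .
  have cop: "coprime a' b'" using quotient_of_coprime[OF q] .
  have "of_int a / of_int b = (of_int a' / of_int b' :: rat)" using quotient_of_div[OF q] ab by simp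
  hence "of_int (a * b') = (of_int (a' * b) :: rat)" using ab(1) b'0 by (simp add: field_simps)
  hence e: "a * b' = a' * b" by linarith
  have "b' dvd a' * b" unfolding e[symmetric] by simp
  hence "b' dvd b" using cop by (simp add: coprime_commute coprime_dvd_mult_right_iff)
  hence "\<not> int p dvd b'" using ab(2) dvd_trans by blast
  thus "in_Zp p x" using q by (simp add: in_Zp_def)
qed

lemma in_Zp_of_int: "prime p \<Longrightarrow> in_Zp p (of_int a)"
  by (simp add: in_Zp_def prime_nat_iff)

lemma in_Zp_of_nat: "prime p \<Longrightarrow> in_Zp p (of_nat a)"
  by (simp add: in_Zp_def prime_nat_iff)

lemma in_Zp_add:
  assumes p: "prime p" and x: "in_Zp p x" and y: "in_Zp p y"
  shows "in_Zp p (x + y)"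
proof -
  obtain a b where ab: "b \<noteq> 0" "\<not> int p dvd b" "x = of_int a / of_int b" using x in_Zp_iff[OF p] by blast
  obtain c d where cd: "d \<noteq> 0" "\<not> int p dvd d" "y = of_int c / of_int d" using y in_Zp_iff[OF p] by blast
  have pp: "prime (int p)" using p by simp
  have "x + y = of_int (a*d + c*b) / of_int (b*d)" using ab cd by (simp add: field_simps)
  moreover have "b * d \<noteq> 0" using ab cd by simp
  moreover have "\<not> int p dvd b * d" using ab cd pp prime_dvd_mult_iff by blast
  ultimately show ?thesis using in_Zp_iff[OF p] by blast
qed

lemma in_Zp_mult:
  assumes p: "prime p" and x: "in_Zp p x" and y: "in_Zp p y"
  shows "in_Zp p (x * y)"
proof -
  obtain a b where ab: "b \<noteq> 0" "\<not> int p dvd b" "x = of_int a / of_int b" using x in_Zp_iff[OF p] by blast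
  obtain c d where cd: "d \<noteq> 0" "\<not> int p dvd d" "y = of_int c / of_int d" using y in_Zp_iff[OF p] by blast
  have pp: "prime (int p)" using p by simp
  have "x * y = of_int (a*c) / of_int (b*d)" using ab cd by (simp add: field_simps)
  moreover have "b * d \<noteq> 0" using ab cd by simp
  moreover have "\<not> int p dvd b * d" using ab cd pp prime_dvd_mult_iff by blast
  ultimately show ?thesis using in_Zp_iff[OF p] by blast
qed

lemma in_Zp_uminus:
  assumes p: "prime p" and x: "in_Zp p x"
  shows "in_Zp p (- x)"
proof -
  have "- x = of_int (-1) * x" by simp
  thus ?thesis using in_Zp_mult[OF p in_Zp_of_int[OF p, of "-1"] x] by simp
qed

lemma in_Zp_diff:
  assumes p: "prime p" and x: "in_Zp p x" and y: "in_Zp p y"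
  shows "in_Zp p (x - y)"
  using in_Zp_add[OF p x in_Zp_uminus[OF p y]] by simp

lemma in_Zp_sum:
  assumes p: "prime p" and "\<And>x. x \<in> A \<Longrightarrow> in_Zp p (f x)"
  shows "in_Zp p (sum f A)"
  using assms(2)
proof (induction A rule: infinite_finite_induct)
  case (infinite A) thus ?case using in_Zp_of_int[OF p, of 0] by simp
next
  case empty thus ?case using in_Zp_of_int[OF p, of 0] by simp
next
  case (insert x F) thus ?case using in_Zp_add[OF p] by simp
qed

definition punit :: "nat \<Rightarrow> rat \<Rightarrow> bool" where
  "punit p x \<longleftrightarrow> (\<exists>a b. \<not> int p dvd a \<and> \<not> int p dvd b \<and> x = of_int a / of_int b)"

lemma punit_mult:
  assumes p: "prime p" and x: "punit p x" and y: "punit p y"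
  shows "punit p (x * y)"
proof -
  obtain a b where ab: "\<not> int p dvd a" "\<not> int p dvd b" "x = of_int a / of_int b" using x punit_def by blast
  obtain c d where cd: "\<not> int p dvd c" "\<not> int p dvd d" "y = of_int c / of_int d" using y punit_def by blast
  have pp: "prime (int p)" using p by simp
  have "x * y = of_int (a*c) / of_int (b*d)" using ab cd by (simp add: field_simps)
  moreover have "\<not> int p dvd b * d" using ab cd pp prime_dvd_mult_iff by blast
  moreover have "\<not> int p dvd a * c" using ab cd pp prime_dvd_mult_iff by blast
  ultimately show ?thesis unfolding punit_def by blast
qed

lemma punit_of_int: "\<not> int p dvd a \<Longrightarrow> punit p (of_int a)"
  unfolding punit_def by (rule exI[of _ a], rule exI[of _ 1]) auto

lemma punit_of_nat: "\<not> p dvd a \<Longrightarrow> punit p (of_nat a)"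
  using punit_of_int[of p "int a"] by simp

lemma punit_power:
  assumes p: "prime p" and x: "punit p x"
  shows "punit p (x ^ n)"
proof (induction n)
  case 0
  have "\<not> int p dvd 1" using p by (simp add: prime_nat_iff)
  thus ?case using punit_of_int[of p 1] by simp
next
  case (Suc n) thus ?case using punit_mult[OF p x] by simp
qed

lemma in_Zp_div:
  assumes p: "prime p" and y: "in_Zp p y" and x: "punit p x"
  shows "in_Zp p (y / x)"
proof -
  obtain a b where ab: "\<not> int p dvd a" "\<not> int p dvd b" "x = of_int a / of_int b" using x punit_def by blast
  have "a \<noteq> 0" using ab by auto
  have "y / x = y * (of_int b / of_int a)" using ab by (simp only: divide_divide_eq_right mult_divide_mult_cancel_right) simp
  moreover have "in_Zp p (of_int b / of_int a)" using in_Zp_iff[OF p] ab \<open>a \<noteq> 0\<close> by blast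
  ultimately show ?thesis using in_Zp_mult[OF p y] by metis
qed

lemma punit_m:
  assumes p: "prime p" and m: "in_Zp p m" and nc: "\<not> cong_Zp m 0 p 1"
  shows "punit p m"
proof -
  obtain a b where q: "quotient_of m = (a, b)" by (cases "quotient_of m")
  have b0: "b > 0" using quotient_of_denom_pos[OF q] .
  have nb: "\<not> int p dvd b" using m q by (simp add: in_Zp_def)
  have meq: "m = of_int a / of_int b" using quotient_of_div[OF q] .
  have "\<not> int p dvd a"
  proof
    assume "int p dvd a"
    then obtain c where c: "a = int p * c" by blast
    have "m / of_nat p = of_int c / of_int b" using meq c p prime_gt_0_nat[OF p] by (simp add: field_simps)
    hence "in_Zp p (m / of_nat p)" using in_Zp_iff[OF p] b0 nb by (metis less_irrefl)
    thus False using nc by (simp add: cong_Zp_def)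
  qed
  thus ?thesis using nb meq unfolding punit_def by blast
qed



lemma cb_rec: "Suc k * ((2 * Suc k) choose Suc k) = 2 * (2*k+1) * ((2*k) choose k)"
proof -
  define A where "A = ((2 * Suc k) choose Suc k)"
  define B where "B = ((2*k) choose k)"
  define F where "F = (fact k :: nat)"
  have e1: "F * F * B = fact (2*k)"
    using binomial_fact_lemma[of k "2*k"] unfolding F_def B_def by simp
  have e2: "fact (Suc k) * fact (Suc k) * A = (fact (2 * Suc k) :: nat)"
    using binomial_fact_lemma[of "Suc k" "2 * Suc k"] unfolding A_def by simp
  have f1: "fact (2 * Suc k) = (2*k+2) * (2*k+1) * (fact (2*k) :: nat)"
    by (simp add: algebra_simps)
  have f2: "fact (Suc k) = Suc k * F" unfolding F_def by simp
  have "(F * F * Suc k) * (Suc k * A) = (F * F * Suc k) * (2 * (2*k+1) * B)"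
  proof -
    have "(F * F * Suc k) * (Suc k * A) = fact (Suc k) * fact (Suc k) * A" unfolding f2 by (simp only: ac_simps)
    also have "\<dots> = (2*k+2) * (2*k+1) * (F * F * B)" using e2 f1 e1 by simp
    also have "\<dots> = (F * F * Suc k) * (2 * (2*k+1) * B)" by (simp only: ac_simps) simp
    finally show ?thesis .
  qed
  moreover have "F * F * Suc k \<noteq> 0" unfolding F_def by simp
  ultimately have "Suc k * A = 2 * (2*k+1) * B" by (meson mult_left_cancel)
  thus ?thesis unfolding A_def B_def .
qed

definition tt :: "rat \<Rightarrow> nat \<Rightarrow> rat" where
  "tt m k = of_nat ((2*k) choose k) ^ 3 / (16*m) ^ k"

lemma tt_Suc:
  assumes "m \<noteq> 0"
  shows "tt m (Suc k) = tt m k * (2 * of_nat k + 1) ^ 3 / (2 * m * (of_nat k + 1) ^ 3)"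
proof -
  have "of_nat (Suc k) * of_nat ((2 * Suc k) choose Suc k) = (2 * (2 * of_nat k + 1) * of_nat ((2*k) choose k) :: rat)"
    using arg_cong[OF cb_rec[of k], of "of_nat :: nat \<Rightarrow> rat"] by (simp only: of_nat_mult) simp
  hence c: "of_nat ((2 * Suc k) choose Suc k) = (2 * (2 * of_nat k + 1) * of_nat ((2*k) choose k) :: rat) / (of_nat k + 1)"
    by (simp add: field_simps)
  show ?thesis unfolding tt_def c using assms
    by (simp only: power_divide power_mult_distrib power_Suc) (simp add: field_simps)
qed

lemma alg1:
  fixes x T m :: rat
  assumes "m \<noteq> 0" "x + 1 \<noteq> 0" "2*x+1 \<noteq> 0"
  shows "T * (2*x+1)^3 / (2*m*(x+1)^3) * (x+1)^2 * (16*(x+1)-12) / (2*(x+1)-1)^2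
     = T * (2*x+1) * (8*x+2) / (m*(x+1))"
proof -
  have e: "2*(x+1)-1 = 2*x+1" by simp
  show ?thesis unfolding e using assms by (simp add: divide_simps) algebra
qed

lemma alg2:
  fixes x T m :: rat
  assumes "m \<noteq> 0" "x + 1 \<noteq> 0" "2*x+1 \<noteq> 0" "2*x-1 \<noteq> 0"
  shows "T / (2*x-1)^2 = (4 - 16/m) * (x * T) + (1 + 4/m) * T
          - 6/m * (T / (x + 1)) + (T * (2*x+1) * (8*x+2) / (m*(x+1)) - T * x^2 * (16*x-12) / (2*x-1)^2)"
  using assms by (simp add: divide_simps) algebra

definition GG :: "rat \<Rightarrow> nat \<Rightarrow> rat" where
  "GG m k = tt m k * (of_nat k)^2 * (16 * of_nat k - 12) / (2 * of_nat k - 1)^2"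

lemma GG_Suc:
  assumes "m \<noteq> 0"
  shows "GG m (Suc k) = tt m k * (2 * of_nat k + 1) * (8 * of_nat k + 2) / (m * (of_nat k + 1))"
proof -
  have a: "(2 * of_nat k + 1 :: rat) \<noteq> 0" by (metis of_nat_0_le_iff add_nonneg_pos mult_nonneg_nonneg zero_le_numeral zero_less_one less_irrefl)
  have b: "(of_nat k + 1 :: rat) \<noteq> 0" by (metis of_nat_Suc of_nat_eq_0_iff add.commute nat.distinct(1))
  have "GG m (Suc k) = tt m k * (2 * of_nat k + 1) ^ 3 / (2 * m * (of_nat k + 1) ^ 3) * (of_nat k + 1)^2 * (16 * (of_nat k + 1) - 12) / (2 * (of_nat k + 1) - 1)^2"
    unfolding GG_def tt_Suc[OF assms] by simp
  also have "\<dots> = tt m k * (2 * of_nat k + 1) * (8 * of_nat k + 2) / (m * (of_nat k + 1))"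
    by (rule alg1[OF assms b a])
  finally show ?thesis .
qed

lemma step:
  assumes "m \<noteq> 0"
  shows "tt m k / (2 * of_nat k - 1)^2 = (4 - 16/m) * (of_nat k * tt m k) + (1 + 4/m) * tt m k
          - 6/m * (tt m k / (of_nat k + 1)) + (GG m (Suc k) - GG m k)"
proof -
  have a: "(2 * of_nat k + 1 :: rat) \<noteq> 0" by (metis of_nat_0_le_iff add_nonneg_pos mult_nonneg_nonneg zero_le_numeral zero_less_one less_irrefl)
  have b: "(of_nat k + 1 :: rat) \<noteq> 0" by (metis of_nat_Suc of_nat_eq_0_iff add.commute nat.distinct(1))
  have c: "(2 * of_nat k - 1 :: rat) \<noteq> 0"
  proof
    assume "(2 * of_nat k - 1 :: rat) = 0"
    hence "of_nat (2*k) = (of_nat 1 :: rat)" by simp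
    hence "2*k = 1" using of_nat_eq_iff by blast
    thus False by presburger
  qed
  show ?thesis unfolding GG_Suc[OF assms] unfolding GG_def
    by (rule alg2[OF assms b a c])
qed



lemma tele:
  assumes "m \<noteq> 0"
  shows "(\<Sum>k<N. tt m k / (2 * of_nat k - 1)^2) = (4 - 16/m) * (\<Sum>k<N. of_nat k * tt m k)
     + (1 + 4/m) * (\<Sum>k<N. tt m k) - 6/m * (\<Sum>k<N. tt m k / (of_nat k + 1)) + GG m N"
proof (induction N)
  case 0 thus ?case by (simp add: GG_def)
next
  case (Suc N)
  show ?case unfolding sum.lessThan_Suc Suc step[OF assms, of N]
    by (simp add: distrib_left right_diff_distrib)
qed

lemma split_sum:
  fixes g :: "nat \<Rightarrow> rat"
  assumes "n < p"
  shows "(\<Sum>k<p. g k) = (\<Sum>k=0..n. g k) + (\<Sum>k\<in>{Suc n..<p}. g k)"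
proof -
  have "(\<Sum>k=0..n. g k) + (\<Sum>k\<in>{Suc n..<p}. g k) = (\<Sum>k\<in>{0..<p}. g k)"
    unfolding atLeastLessThanSuc_atLeastAtMost[symmetric]
    by (rule sum.atLeastLessThan_concat) (use assms in auto)
  thus ?thesis by (simp add: atLeast0LessThan)
qed

lemma p_dvd_cb:
  assumes p: "prime p" and "k < p" "p \<le> 2*k"
  shows "p dvd ((2*k) choose k)"
proof -
  have e1: "fact k * fact k * ((2*k) choose k) = (fact (2*k) :: nat)"
    using binomial_fact_lemma[of k "2*k"] by simp
  have "p dvd fact (2*k)" using prime_dvd_fact_iff[OF p] assms by simp
  hence "p dvd fact k * fact k * ((2*k) choose k)" using e1 by simp
  moreover have "\<not> p dvd fact k" using prime_dvd_fact_iff[OF p] assms by simp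
  ultimately show ?thesis using p prime_dvd_mult_iff by blast
qed

lemma alg3:
  fixes A0 B0 C0 SA SB SC s m x :: rat
  assumes "m \<noteq> 0" "x + 1 \<noteq> 0"
  shows "(4-16/m)*(A0 + (x+1)^3*SA) + (1+4/m)*(B0+(x+1)^3*SB) - 6/m*(C0 + ((x+1)^3*SC + (x+1)^3*s/(x+1)))
     + (x+1)^3*s*(2*x+1)*(8*x+2)/(m*(x+1)) - ((4-16/m)*A0 + (1+4/m)*B0 - 6/m*C0)
   = (x+1)^3 * ((4-16/m)*SA + (1+4/m)*SB - 6/m*SC + s*(16*(x+1)-20)/m)"
  using assms by (simp add: divide_simps) algebra

lemma in_Zp_pow:
  assumes p: "prime p" and x: "in_Zp p x"
  shows "in_Zp p (x ^ n)"
proof (induction n)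
  case 0 show ?case using in_Zp_of_int[OF p, of 1] by simp
next
  case (Suc n) thus ?case using in_Zp_mult[OF p x] by simp
qed

theorem theorem5p2:
  fixes p :: nat and m :: rat
  assumes "prime p" and "odd p"
    and "in_Zp p m" and "\<not> cong_Zp m 0 p 1"
  shows "cong_Zp
    (\<Sum>k = 0..p - 1. of_nat ((2*k) choose k) ^ 3 / ((16*m) ^ k * (2 * of_nat k - 1) ^ 2))
    ((4 - 16 / m) * (\<Sum>k = 0..(p - 1) div 2. of_nat k * of_nat ((2*k) choose k) ^ 3 / (16*m) ^ k)
     + (1 + 4 / m) * (\<Sum>k = 0..(p - 1) div 2. of_nat ((2*k) choose k) ^ 3 / (16*m) ^ k)
     - 6 / m * (\<Sum>k = 0..(p - 1) div 2. of_nat ((2*k) choose k) ^ 3 / ((16*m) ^ k * (of_nat k + 1))))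
    p 3"
proof -
  note p = assms(1)
  have mu: "punit p m" using punit_m[OF p assms(3,4)] .
  have m0: "m \<noteq> 0" using mu unfolding punit_def by auto
  obtain j where pj: "p = Suc j" using prime_gt_0_nat[OF p] gr0_implies_Suc by blast
  define n where "n = j div 2"
  have jn: "j = 2 * n" using assms(2) pj unfolding n_def by presburger
  have j1: "j \<ge> 1" using prime_gt_1_nat[OF p] pj by simp
  have nj: "Suc n \<le> j" using jn j1 by simp
  have pm1: "p - 1 = j" "(p - 1) div 2 = n" using pj n_def by auto
  define s where "s k = of_nat (((2*k) choose k) div p) ^ 3 / (16*m) ^ k" for k
  have ts: "tt m k = of_nat p ^ 3 * s k" if "k \<in> {Suc n..<Suc j}" for k
  proof -
    have "p dvd ((2*k) choose k)" using p_dvd_cb[OF p] that pj jn by auto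
    hence "(2*k) choose k = p * (((2*k) choose k) div p)" by simp
    hence "of_nat ((2*k) choose k) = (of_nat p * of_nat (((2*k) choose k) div p) :: rat)"
      by (metis of_nat_mult)
    thus ?thesis unfolding tt_def s_def by (simp add: power_mult_distrib)
  qed
  define A0 where "A0 = (\<Sum>k = 0..n. of_nat k * tt m k)"
  define B0 where "B0 = (\<Sum>k = 0..n. tt m k)"
  define C0 where "C0 = (\<Sum>k = 0..n. tt m k / (of_nat k + 1))"
  define SA where "SA = (\<Sum>k \<in> {Suc n..<Suc j}. of_nat k * s k)"
  define SB where "SB = (\<Sum>k \<in> {Suc n..<Suc j}. s k)"
  define SC where "SC = (\<Sum>k \<in> {Suc n..<j}. s k / (of_nat k + 1))"
  define Y where "Y = (4-16/m)*SA + (1+4/m)*SB - 6/m*SC + s j*(16*(of_nat j+1)-20)/m"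
  have L: "(\<Sum>k = 0..p - 1. of_nat ((2*k) choose k) ^ 3 / ((16*m) ^ k * (2 * of_nat k - 1) ^ 2))
      = (\<Sum>k<p. tt m k / (2 * of_nat k - 1)^2)"
    unfolding pm1 pj atLeastLessThanSuc_atLeastAtMost[symmetric] atLeast0LessThan
    by (simp add: tt_def)
  have R: "((4 - 16 / m) * (\<Sum>k = 0..(p - 1) div 2. of_nat k * of_nat ((2*k) choose k) ^ 3 / (16*m) ^ k)
     + (1 + 4 / m) * (\<Sum>k = 0..(p - 1) div 2. of_nat ((2*k) choose k) ^ 3 / (16*m) ^ k)
     - 6 / m * (\<Sum>k = 0..(p - 1) div 2. of_nat ((2*k) choose k) ^ 3 / ((16*m) ^ k * (of_nat k + 1))))
     = (4-16/m)*A0 + (1+4/m)*B0 - 6/m*C0"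
    unfolding pm1(2) A0_def B0_def C0_def by (simp add: tt_def)
  have np: "n < p" using pj jn by simp
  have sA: "(\<Sum>k<p. of_nat k * tt m k) = A0 + of_nat p ^ 3 * SA"
    unfolding split_sum[OF np] A0_def SA_def sum_distrib_left
    by (rule arg_cong[where f="\<lambda>x. _ + x"], rule sum.cong) (auto simp: ts pj)
  have sB: "(\<Sum>k<p. tt m k) = B0 + of_nat p ^ 3 * SB"
    unfolding split_sum[OF np] B0_def SB_def sum_distrib_left
    by (rule arg_cong[where f="\<lambda>x. _ + x"], rule sum.cong) (auto simp: ts pj)
  have sC0: "(\<Sum>k\<in>{Suc n..<Suc j}. tt m k / (of_nat k + 1))
     = (\<Sum>k\<in>{Suc n..<j}. tt m k / (of_nat k + 1)) + tt m j / (of_nat j + 1)"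
    using nj by simp
  have sC: "(\<Sum>k<p. tt m k / (of_nat k + 1)) = C0 + (of_nat p ^ 3 * SC + of_nat p ^ 3 * s j / (of_nat j + 1))"
  proof -
    have a: "(\<Sum>k<p. tt m k / (of_nat k + 1)) = C0 + (\<Sum>k\<in>{Suc n..<Suc j}. tt m k / (of_nat k + 1))"
      using split_sum[OF np, of "\<lambda>k. tt m k / (of_nat k + 1)"] by (simp only: C0_def pj)
    have b: "(\<Sum>k\<in>{Suc n..<j}. tt m k / (of_nat k + 1)) = of_nat p ^ 3 * SC"
      unfolding SC_def sum_distrib_left by (rule sum.cong) (auto simp: ts)
    have c: "tt m j / (of_nat j + 1) = of_nat p ^ 3 * s j / (of_nat j + 1)"
      using ts[of j] nj by simp
    show ?thesis unfolding a sC0 b c by simp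
  qed
  have G: "GG m p = of_nat p ^ 3 * s j * (2 * of_nat j + 1) * (8 * of_nat j + 2) / (m * (of_nat j + 1))"
    unfolding pj GG_Suc[OF m0] using ts[of j] nj pj by simp
  have pe: "(of_nat p :: rat) = of_nat j + 1" using pj by simp
  have diff: "(\<Sum>k<p. tt m k / (2 * of_nat k - 1)^2) - ((4-16/m)*A0 + (1+4/m)*B0 - 6/m*C0) = of_nat p ^ 3 * Y"
    unfolding tele[OF m0] sA sB sC G Y_def unfolding pe
    by (rule alg3[OF m0]) simp
  have p0: "(of_nat p :: rat) \<noteq> 0" using pj by simp
  have "\<not> p dvd 16"
  proof
    assume "p dvd 16"
    hence "p dvd (2::nat) ^ 4" by simp
    hence "p dvd 2" using prime_dvd_power[OF p] by blast
    hence "p \<le> 2" by (simp add: dvd_imp_le)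
    thus False using prime_ge_2_nat[OF p] assms(2) by (metis le_antisym even_numeral)
  qed
  hence u16: "punit p (of_nat 16)" by (rule punit_of_nat)
  have um: "punit p ((16*m)^k)" for k using punit_power[OF p punit_mult[OF p u16 mu]] by simp
  have ins: "in_Zp p (s k)" for k unfolding s_def
    by (rule in_Zp_div[OF p _ um], rule in_Zp_pow[OF p in_Zp_of_nat[OF p]])
  have i4: "in_Zp p 4" using in_Zp_of_nat[OF p, of 4] by simp
  have i1: "in_Zp p 1" using in_Zp_of_nat[OF p, of 1] by simp
  have i6: "in_Zp p 6" using in_Zp_of_nat[OF p, of 6] by simp
  have i16m: "in_Zp p (16/m)" using in_Zp_div[OF p in_Zp_of_nat[OF p, of 16] mu] by simp
  have i4m: "in_Zp p (4/m)" using in_Zp_div[OF p i4 mu] by simp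
  have i6m: "in_Zp p (6/m)" using in_Zp_div[OF p i6 mu] by simp
  have iSA: "in_Zp p SA" unfolding SA_def
    by (rule in_Zp_sum[OF p], rule in_Zp_mult[OF p in_Zp_of_nat[OF p] ins])
  have iSB: "in_Zp p SB" unfolding SB_def by (rule in_Zp_sum[OF p], rule ins)
  have iSC: "in_Zp p SC" unfolding SC_def
  proof (rule in_Zp_sum[OF p])
    fix k assume "k \<in> {Suc n..<j}"
    hence "\<not> p dvd Suc k" using pj by (auto dest: dvd_imp_le)
    hence "punit p (of_nat (Suc k))" by (rule punit_of_nat)
    hence "punit p (of_nat k + 1)" by (simp add: add.commute)
    thus "in_Zp p (s k / (of_nat k + 1))" by (rule in_Zp_div[OF p ins])
  qed
  have ilast: "in_Zp p (s j*(16*(of_nat j+1)-20)/m)"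
  proof -
    have "in_Zp p (16*(of_nat j+1)-20)"
      using in_Zp_diff[OF p in_Zp_of_nat[OF p, of "16*(j+1)"] in_Zp_of_nat[OF p, of 20]] by simp
    thus ?thesis using in_Zp_div[OF p in_Zp_mult[OF p ins] mu] by blast
  qed
  have iY: "in_Zp p Y" unfolding Y_def
    by (intro in_Zp_add[OF p] in_Zp_diff[OF p] in_Zp_mult[OF p] iSA iSB iSC ilast i4 i1 i16m i4m i6m)
  show ?thesis unfolding cong_Zp_def L R using diff iY p0 by simp
qed

end
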